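(* Let $P=[n_1]+[n_2]+\cdots+[n_k]$ be a disjoint union of chains on $[n]$, labeled consecutively within chains (the $i$-th chain is $N_i+1\prec\cdots\prec N_i+n_i$ with $N_i=n_1+\cdots+n_{i-1}$). Fix $I\subseteq[k]$ and let $S\subseteq P$ be the upper set consisting of the top element of the $i$-th chain for each $i\in I$. Then $f([S,\hat 1])$ equals the number of linear extensions $\pi$ of $P$ such that, for every $i\in I$, $\pi$ fixes at least one element of the $i$-th chain (i.e. $\pi_m=m$ for some $m\in\{N_i+1,\dots,N_i+n_i\}$).
   Context: Linear extensions are permutations $\pi$ (one-line notation $\pi_1\cdots\pi_n$) with $i\prec j\Rightarrow\pi^{-1}_i<\pi^{-1}_j$. $L$ is the lattice of upper sets of $P$ ordered by inclusion, with maximum $\hat1=P$; $f([S,\hat 1])$ is the number of maximal chains in the interval $[S,\hat1]$ of $L$. *)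

theory Defs
  imports Main "HOL-Combinatorics.Permutations"
begin

definition chain_offset :: "(nat \<Rightarrow> nat) \<Rightarrow> nat \<Rightarrow> nat" where
  "chain_offset ns i = (\<Sum>j\<in>{1..<i}. ns j)"

definition ground :: "nat \<Rightarrow> (nat \<Rightarrow> nat) \<Rightarrow> nat set" where
  "ground k ns = {1..(\<Sum>i\<in>{1..k}. ns i)}"

definition chain_block :: "(nat \<Rightarrow> nat) \<Rightarrow> nat \<Rightarrow> nat set" where
  "chain_block ns i = {chain_offset ns i + 1 .. chain_offset ns i + ns i}"

definition prec :: "nat \<Rightarrow> (nat \<Rightarrow> nat) \<Rightarrow> nat \<Rightarrow> nat \<Rightarrow> bool" where
  "prec k ns a b \<longleftrightarrow> (\<exists>i\<in>{1..k}. a \<in> chain_block ns i \<and> b \<in> chain_block ns i \<and> a < b)"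

definition upper_set :: "nat \<Rightarrow> (nat \<Rightarrow> nat) \<Rightarrow> nat set \<Rightarrow> bool" where
  "upper_set k ns U \<longleftrightarrow> U \<subseteq> ground k ns \<and> (\<forall>a\<in>U. \<forall>b. prec k ns a b \<longrightarrow> b \<in> U)"

definition interval_top :: "nat \<Rightarrow> (nat \<Rightarrow> nat) \<Rightarrow> nat set \<Rightarrow> nat set set" where
  "interval_top k ns S = {U. upper_set k ns U \<and> S \<subseteq> U \<and> U \<subseteq> ground k ns}"

definition f_interval :: "nat \<Rightarrow> (nat \<Rightarrow> nat) \<Rightarrow> nat set \<Rightarrow> nat" where
  "f_interval k ns S = card {C. subset.maxchain (interval_top k ns S) C}"

text \<open>Linear extensions: permutations pi of {1..n} (one-line notation pi 1 ... pi n)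
  with  a prec b  implying  pi^{-1} a < pi^{-1} b.\<close>
definition linear_extension :: "nat \<Rightarrow> (nat \<Rightarrow> nat) \<Rightarrow> (nat \<Rightarrow> nat) \<Rightarrow> bool" where
  "linear_extension k ns \<pi> \<longleftrightarrow> \<pi> permutes ground k ns \<and>
     (\<forall>a b. prec k ns a b \<longrightarrow> inv \<pi> a < inv \<pi> b)"

end

theory Submission imports Defs "HOL-Combinatorics.Multiset_Permutations"
begin


definition good :: "nat list \<Rightarrow> nat \<Rightarrow> nat \<Rightarrow> bool" where
 "good w i t \<longleftrightarrow> (\<exists>p<length w. w!p = i \<and> length (filter (\<lambda>x. x \<noteq> i) (take p w)) = t)"

lemma good_Nil: "\<not> good [] i t"
  by (simp add: good_def)

lemma good_Cons: "good (a#w) i t \<longleftrightarrow> (a = i \<and> t = 0) \<or> (a = i \<and> good w i t) \<or> (a \<noteq> i \<and> t > 0 \<and> good w i (t - 1))"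
proof
  assume "good (a#w) i t"
  then obtain p where p: "p < length (a#w)" "(a#w)!p = i" "length (filter (\<lambda>x. x \<noteq> i) (take p (a#w))) = t"
    unfolding good_def by blast
  show "(a = i \<and> t = 0) \<or> (a = i \<and> good w i t) \<or> (a \<noteq> i \<and> t > 0 \<and> good w i (t - 1))"
  proof (cases p)
    case 0 then show ?thesis using p by simp
  next
    case (Suc q)
    then have "q < length w" "w!q = i" using p by auto
    moreover have "length (filter (\<lambda>x. x \<noteq> i) (take p (a#w))) = (if a \<noteq> i then 1 else 0) + length (filter (\<lambda>x. x \<noteq> i) (take q w))"
      using Suc by simp
    ultimately show ?thesis using p unfolding good_def by (cases "a = i") force+
  qed
next
  assume h: "(a = i \<and> t = 0) \<or> (a = i \<and> good w i t) \<or> (a \<noteq> i \<and> t > 0 \<and> good w i (t - 1))"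
  show "good (a#w) i t"
  proof -
    { assume "a = i \<and> t = 0" then have ?thesis unfolding good_def by (rule_tac x=0 in exI) simp }
    moreover
    { assume "a = i" "good w i t"
      then obtain q where "q < length w" "w!q = i" "length (filter (\<lambda>x. x \<noteq> i) (take q w)) = t"
        unfolding good_def by blast
      then have ?thesis unfolding good_def using \<open>a = i\<close> by (rule_tac x="Suc q" in exI) simp }
    moreover
    { assume "a \<noteq> i" "t > 0" "good w i (t - 1)"
      then obtain q where "q < length w" "w!q = i" "length (filter (\<lambda>x. x \<noteq> i) (take q w)) = t - 1"
        unfolding good_def by blast
      then have ?thesis unfolding good_def using \<open>a \<noteq> i\<close> \<open>t > 0\<close> by (rule_tac x="Suc q" in exI) simp }
    ultimately show ?thesis using h by blast
  qed
qed

lemma good_set: "good w i t \<Longrightarrow> i \<in> set w"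
  unfolding good_def by auto

lemma card_perms_filter:
  assumes "A \<noteq> {#}"
  shows "card {w \<in> permutations_of_multiset A. P w} =
    (\<Sum>x\<in>set_mset A. card {w \<in> permutations_of_multiset (A - {#x#}). P (x#w)})"
proof -
  have eq: "{w \<in> permutations_of_multiset A. P w} =
     (\<Union>x\<in>set_mset A. ((#) x) ` {w \<in> permutations_of_multiset (A - {#x#}). P (x#w)})"
    using permutations_of_multiset_nonempty[OF assms] by auto
  show ?thesis unfolding eq
    by (subst card_UN_disjoint) (auto simp: card_image inj_on_def)
qed

lemma card_perms_rec:
  assumes "A \<noteq> {#}"
  shows "card (permutations_of_multiset A) =
    (\<Sum>x\<in>set_mset A. card (permutations_of_multiset (A - {#x#})))"
  using card_perms_filter[OF assms, of "\<lambda>_. True"] by simp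

lemma disjE3:
  assumes "\<forall>i\<in>I. \<forall>j\<in>I. i \<noteq> j \<longrightarrow> A i \<inter> A j = {}" "i \<in> I" "j \<in> I" "i \<noteq> j" "x \<in> A i" "x \<in> A j"
  shows False
proof -
  have "A i \<inter> A j = {}" using assms(1-4) by simp
  then show False using assms(5,6) by blast
qed

lemma partB:
  assumes "I \<subseteq> set_mset C"
   "\<forall>i\<in>I. t i + count C i \<le> size C"
   "\<forall>i\<in>I. \<forall>j\<in>I. i \<noteq> j \<longrightarrow> {t i<..t i + count C i} \<inter> {t j<..t j + count C j} = {}"
  shows "card {w \<in> permutations_of_multiset C. \<forall>i\<in>I. good w i (t i)} = card (permutations_of_multiset (C - mset_set I))"
  using assms
proof (induction "size C" arbitrary: C t I)
  case 0
  then show ?case by auto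
next
  case (Suc m)
  have Cne: "C \<noteq> {#}" using Suc.hyps(2) by auto
  have finI: "finite I" using Suc.prems(1) finite_subset by blast
  have cnt1: "count C i \<ge> 1" if "i \<in> I" for i using Suc.prems(1) that by force
  have LHS: "card {w \<in> permutations_of_multiset C. \<forall>i\<in>I. good w i (t i)} =
    (\<Sum>a\<in>set_mset C. card {w \<in> permutations_of_multiset (C - {#a#}). \<forall>i\<in>I. good (a#w) i (t i)})"
    by (rule card_perms_filter[OF Cne])
  have sizeC: "size (C - {#a#}) = m" if "a \<in># C" for a
    using Suc.hyps(2) that by (simp add: size_Diff_singleton)
  show ?case
  proof (cases "\<exists>z\<in>I. t z = 0")
    case True
    then obtain z where z: "z \<in> I" "t z = 0" by blast
    have tpos: "t i > 0" if "i \<in> I" "i \<noteq> z" for i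
    proof (rule ccontr)
      assume "\<not> t i > 0"
      then have "1 \<in> {t i<..t i + count C i}" "1 \<in> {t z<..t z + count C z}"
        using cnt1[OF that(1)] cnt1[OF z(1)] z(2) by auto
      then show False by (rule disjE3[OF Suc.prems(3) that(1) z(1) that(2)])
    qed
    have zC: "z \<in># C" using z Suc.prems(1) by blast
    have other: "card {w \<in> permutations_of_multiset (C - {#a#}). \<forall>i\<in>I. good (a#w) i (t i)} = 0"
      if "a \<noteq> z" for a
    proof -
      have "{w \<in> permutations_of_multiset (C - {#a#}). \<forall>i\<in>I. good (a#w) i (t i)} = {}"
        using z that by (auto simp: good_Cons)
      then show ?thesis by simp
    qed
    have zset: "{w \<in> permutations_of_multiset (C - {#z#}). \<forall>i\<in>I. good (z#w) i (t i)} =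
        {w \<in> permutations_of_multiset (C - {#z#}). \<forall>i\<in>I-{z}. good w i ((\<lambda>i. t i - 1) i)}"
      using z tpos by (auto simp: good_Cons)
    have IH: "card {w \<in> permutations_of_multiset (C - {#z#}). \<forall>i\<in>I-{z}. good w i ((\<lambda>i. t i - 1) i)}
       = card (permutations_of_multiset (C - {#z#} - mset_set (I - {z})))"
    proof (rule Suc.hyps(1))
      show "m = size (C - {#z#})" using sizeC[OF zC] by simp
      show "I - {z} \<subseteq> set_mset (C - {#z#})"
      proof
        fix i assume i: "i \<in> I - {z}"
        then have "count (C - {#z#}) i = count C i" by simp
        then have "0 < count (C - {#z#}) i" using cnt1[of i] i by simp
        then show "i \<in># C - {#z#}" by (metis count_greater_zero_iff)
      qed
      show "\<forall>i\<in>I - {z}. t i - 1 + count (C - {#z#}) i \<le> size (C - {#z#})"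
        using Suc.prems(2) tpos sizeC[OF zC] Suc.hyps(2) by force
      show "\<forall>i\<in>I - {z}. \<forall>j\<in>I - {z}. i \<noteq> j \<longrightarrow>
          {t i - 1<..t i - 1 + count (C - {#z#}) i} \<inter> {t j - 1<..t j - 1 + count (C - {#z#}) j} = {}"
      proof (intro ballI impI)
        fix i j assume ij: "i \<in> I - {z}" "j \<in> I - {z}" "i \<noteq> j"
        show "{t i - 1<..t i - 1 + count (C - {#z#}) i} \<inter> {t j - 1<..t j - 1 + count (C - {#z#}) j} = {}"
        proof (rule ccontr)
          assume "\<not> ?thesis"
          then obtain x where x: "x \<in> {t i - 1<..t i - 1 + count (C - {#z#}) i}" "x \<in> {t j - 1<..t j - 1 + count (C - {#z#}) j}" by blast
          have "Suc x \<in> {t i<..t i + count C i}" "Suc x \<in> {t j<..t j + count C j}"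
            using x tpos[of i] tpos[of j] ij by auto
          then show False using disjE3[OF Suc.prems(3), of i j "Suc x"] ij by blast
        qed
      qed
    qed
    have "(\<Sum>a\<in>set_mset C. card {w \<in> permutations_of_multiset (C - {#a#}). \<forall>i\<in>I. good (a#w) i (t i)})
        = card {w \<in> permutations_of_multiset (C - {#z#}). \<forall>i\<in>I. good (z#w) i (t i)}"
      using zC other by (subst sum.remove[of _ z]) auto
    moreover have "C - {#z#} - mset_set (I - {z}) = C - mset_set I"
      using finI z(1) by (simp add: mset_set.remove)
    ultimately show ?thesis using LHS zset IH by simp
  next
    case False
    then have tpos: "t i > 0" if "i \<in> I" for i using that by auto
    define D where "D = C - mset_set I"
    have countD: "count D a = count C a - (if a \<in> I then 1 else 0)" for a
      unfolding D_def using finI by (simp add: count_mset_set)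
    have setD: "set_mset D = {a \<in> set_mset C. \<not> (a \<in> I \<and> count C a = 1)}"
    proof (rule set_eqI)
      fix a
      have "0 < count D a \<longleftrightarrow> (0 < count C a \<and> \<not> (a \<in> I \<and> count C a = 1))"
        unfolding countD using cnt1[of a] by (cases "a \<in> I") (auto simp del: count_greater_zero_iff)
      then show "a \<in> set_mset D \<longleftrightarrow> a \<in> {a \<in> set_mset C. \<not> (a \<in> I \<and> count C a = 1)}"
        by simp
    qed  
    have term0: "card {w \<in> permutations_of_multiset (C - {#a#}). \<forall>i\<in>I. good (a#w) i (t i)} = 0"
      if "a \<in> I" "count C a = 1" for a
    proof -
      have "{w \<in> permutations_of_multiset (C - {#a#}). \<forall>i\<in>I. good (a#w) i (t i)} = {}"
      proof safe
        fix w assume w: "w \<in> permutations_of_multiset (C - {#a#})" "\<forall>i\<in>I. good (a#w) i (t i)"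
        have "good (a#w) a (t a)" using w(2) that(1) by blast
        then have "good w a (t a)" using that tpos[of a] by (simp add: good_Cons)
        then have "a \<in> set w" by (rule good_set)
        then have "a \<in># C - {#a#}" using w(1) by (metis permutations_of_multisetD set_mset_mset)
        then show "w \<in> {}" using that by (simp add: in_diff_count)
      qed
      then show ?thesis by simp
    qed
    have termIH: "card {w \<in> permutations_of_multiset (C - {#a#}). \<forall>i\<in>I. good (a#w) i (t i)}
        = card (permutations_of_multiset (D - {#a#}))"
      if a: "a \<in># C" "\<not> (a \<in> I \<and> count C a = 1)" for a
    proof -
      define ta where "ta = (\<lambda>i. if i = a then t i else t i - 1)"
      have eqs: "{w \<in> permutations_of_multiset (C - {#a#}). \<forall>i\<in>I. good (a#w) i (t i)} =
          {w \<in> permutations_of_multiset (C - {#a#}). \<forall>i\<in>I. good w i (ta i)}"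
      proof -
        have "good (a#w) i (t i) \<longleftrightarrow> good w i (ta i)" if "i \<in> I" for w i
          using tpos[OF that] unfolding ta_def by (cases "i = a") (simp_all add: good_Cons)
        then show ?thesis by blast
      qed
      have shift: "Suc x \<in> {t i<..t i + count C i}" if "i \<in> I" "x \<in> {ta i<..ta i + count (C - {#a#}) i}" for i x
        using that tpos[OF that(1)] unfolding ta_def by (auto split: if_splits)
      have "card {w \<in> permutations_of_multiset (C - {#a#}). \<forall>i\<in>I. good w i (ta i)}
         = card (permutations_of_multiset (C - {#a#} - mset_set I))"
      proof (rule Suc.hyps(1))
        show "m = size (C - {#a#})" using sizeC[OF a(1)] by simp
        show "I \<subseteq> set_mset (C - {#a#})"
        proof
          fix i assume "i \<in> I"
          then have ci: "1 \<le> count C i" by (rule cnt1)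
          have "0 < count (C - {#a#}) i"
          proof (cases "i = a")
            case True
            then have "count C a \<noteq> 1" using a(2) \<open>i \<in> I\<close> by blast
            then have "count C i \<noteq> 1" using True by simp
            then have "count C i - 1 > 0" using ci by linarith
            then show ?thesis using True by simp
          next
            case False
            then have "count (C - {#a#}) i = count C i" by simp
            then show ?thesis using ci by linarith
          qed
          then show "i \<in># C - {#a#}" by (metis count_greater_zero_iff)
        qed
        show "\<forall>i\<in>I. ta i + count (C - {#a#}) i \<le> size (C - {#a#})"
          using Suc.prems(2) tpos sizeC[OF a(1)] Suc.hyps(2) a(1) unfolding ta_def
          by (auto simp: Suc_le_eq)
        show "\<forall>i\<in>I. \<forall>j\<in>I. i \<noteq> j \<longrightarrow>
          {ta i<..ta i + count (C - {#a#}) i} \<inter> {ta j<..ta j + count (C - {#a#}) j} = {}"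
        proof (intro ballI impI)
          fix i j assume ij: "i \<in> I" "j \<in> I" "i \<noteq> j"
          show "{ta i<..ta i + count (C - {#a#}) i} \<inter> {ta j<..ta j + count (C - {#a#}) j} = {}"
          proof (rule ccontr)
            assume "\<not> ?thesis"
            then obtain x where x: "x \<in> {ta i<..ta i + count (C - {#a#}) i}" "x \<in> {ta j<..ta j + count (C - {#a#}) j}" by blast
            have "Suc x \<in> {t i<..t i + count C i}" "Suc x \<in> {t j<..t j + count C j}"
              using shift[OF ij(1) x(1)] shift[OF ij(2) x(2)] by auto
            then show False using disjE3[OF Suc.prems(3), of i j "Suc x"] ij by blast
          qed
        qed
      qed
      moreover have "C - {#a#} - mset_set I = D - {#a#}"
        unfolding D_def by (simp add: multiset_eq_iff)
      ultimately show ?thesis using eqs by simp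
    qed
    have Dne: "D \<noteq> {#}"
    proof
      assume D0: "D = {#}"
      have allI1: "a \<in> I \<and> count C a = 1" if "a \<in># C" for a
        using setD D0 that by auto
      have CI: "C = mset_set I"
      proof (rule multiset_eqI)
        fix a
        show "count C a = count (mset_set I) a"
        proof (cases "a \<in># C")
          case True
          then show ?thesis using allI1[OF True] finI by (simp add: count_mset_set)
        next
          case False
          then have "a \<notin> I" using Suc.prems(1) by blast
          then show ?thesis using False finI by (simp add: count_mset_set not_in_iff)
        qed
      qed
      have sz: "size C = card I" using CI by simp
      have Ine: "I \<noteq> {}" using CI Cne by auto
      have inj: "inj_on t I"
      proof (rule inj_onI)
        fix i j assume ij: "i \<in> I" "j \<in> I" "t i = t j"
        show "i = j"
        proof (rule ccontr)
          assume "i \<noteq> j"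
          have "Suc (t i) \<in> {t i<..t i + count C i}" "Suc (t i) \<in> {t j<..t j + count C j}"
            using cnt1 ij by auto
          then show False using disjE3[OF Suc.prems(3), of i j "Suc (t i)"] ij \<open>i \<noteq> j\<close> by blast
        qed
      qed
      have "t ` I \<subseteq> {1..card I - 1}"
      proof
        fix y assume "y \<in> t ` I"
        then obtain i where i: "i \<in> I" "y = t i" by blast
        have "count C i = 1" using allI1 i(1) Suc.prems(1) by blast
        then have "t i + 1 \<le> card I" using Suc.prems(2) i(1) sz by force
        then show "y \<in> {1..card I - 1}" using tpos[OF i(1)] i(2) by simp
      qed
      then have "card (t ` I) \<le> card {1..card I - 1}" by (rule card_mono[rotated]) simp
      then have "card (t ` I) \<le> card I - 1" by simp
      moreover have "card (t ` I) = card I" using inj by (simp add: card_image)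
      moreover have "card I > 0" using Ine finI by (simp add: card_gt_0_iff)
      ultimately show False by simp
    qed
    have "(\<Sum>a\<in>set_mset C. card {w \<in> permutations_of_multiset (C - {#a#}). \<forall>i\<in>I. good (a#w) i (t i)})
        = (\<Sum>a\<in>set_mset D. card {w \<in> permutations_of_multiset (C - {#a#}). \<forall>i\<in>I. good (a#w) i (t i)})"
    proof (rule sum.mono_neutral_right)
      show "finite (set_mset C)" by simp
      show "set_mset D \<subseteq> set_mset C" using setD by blast
      show "\<forall>a\<in>set_mset C - set_mset D. card {w \<in> permutations_of_multiset (C - {#a#}). \<forall>i\<in>I. good (a#w) i (t i)} = 0"
      proof
        fix a assume "a \<in> set_mset C - set_mset D"
        then have "a \<in> I" "count C a = 1" using setD by blast+
        then show "card {w \<in> permutations_of_multiset (C - {#a#}). \<forall>i\<in>I. good (a#w) i (t i)} = 0"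
          by (rule term0)
      qed
    qed
    also have "\<dots> = (\<Sum>a\<in>set_mset D. card (permutations_of_multiset (D - {#a#})))"
    proof (rule sum.cong)
      fix a assume "a \<in> set_mset D"
      then have "a \<in># C" "\<not> (a \<in> I \<and> count C a = 1)" using setD by blast+
      then show "card {w \<in> permutations_of_multiset (C - {#a#}). \<forall>i\<in>I. good (a#w) i (t i)} = card (permutations_of_multiset (D - {#a#}))"
        by (rule termIH)
    qed simp
    also have "\<dots> = card (permutations_of_multiset D)"
      by (rule card_perms_rec[OF Dne, symmetric])
    finally show ?thesis using LHS D_def by simp
  qed
qed


lemma offset_Suc: "1 \<le> i \<Longrightarrow> chain_offset ns (Suc i) = chain_offset ns i + ns i"
  unfolding chain_offset_def by (simp add: atLeastLessThanSuc add.commute)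

lemma offset_mono: "i \<le> j \<Longrightarrow> chain_offset ns i \<le> chain_offset ns j"
  unfolding chain_offset_def by (rule sum_mono2) auto

lemma offset_le: "1 \<le> i \<Longrightarrow> i < j \<Longrightarrow> chain_offset ns i + ns i \<le> chain_offset ns j"
  using offset_Suc[of i ns] offset_mono[of "Suc i" j ns] by simp

lemma total_eq: "(\<Sum>i\<in>{1..k}. ns i) = chain_offset ns (Suc k)"
  unfolding chain_offset_def by (simp add: atLeastLessThanSuc_atLeastAtMost)

lemma block_disj:
  assumes "1 \<le> i" "1 \<le> j" "x \<in> chain_block ns i" "x \<in> chain_block ns j"
  shows "i = j"
proof (rule ccontr)
  assume "i \<noteq> j"
  then consider "i < j" | "j < i" by linarith
  then show False
  proof cases
    case 1 then show ?thesis using offset_le[OF assms(1) 1, of ns] assms(3,4) by (auto simp: chain_block_def)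
  next
    case 2 then show ?thesis using offset_le[OF assms(2) 2, of ns] assms(3,4) by (auto simp: chain_block_def)
  qed
qed

lemma block_sub: "i \<in> {1..k} \<Longrightarrow> chain_block ns i \<subseteq> ground k ns"
  unfolding chain_block_def ground_def total_eq
  using offset_Suc[of i ns] offset_mono[of "Suc i" "Suc k" ns] by auto

lemma cover: "x \<in> ground k ns \<Longrightarrow> \<exists>i\<in>{1..k}. x \<in> chain_block ns i"
proof (induction k)
  case 0 then show ?case by (simp add: ground_def)
next
  case (Suc k)
  show ?case
  proof (cases "x \<le> chain_offset ns (Suc k)")
    case True
    then have "x \<in> ground k ns" using Suc.prems unfolding ground_def total_eq by simp
    then show ?thesis using Suc.IH by force
  next
    case False
    then have "x \<in> chain_block ns (Suc k)" using Suc.prems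
      unfolding ground_def total_eq chain_block_def using offset_Suc[of "Suc k" ns] by simp
    then show ?thesis by force
  qed
qed

definition cof :: "nat \<Rightarrow> (nat \<Rightarrow> nat) \<Rightarrow> nat \<Rightarrow> nat" where
  "cof k ns x = (THE i. i \<in> {1..k} \<and> x \<in> chain_block ns i)"

lemma cof_eq: "i \<in> {1..k} \<Longrightarrow> x \<in> chain_block ns i \<Longrightarrow> cof k ns x = i"
  unfolding cof_def by (rule the_equality) (auto intro: block_disj)

lemma cof_in: "x \<in> ground k ns \<Longrightarrow> cof k ns x \<in> {1..k} \<and> x \<in> chain_block ns (cof k ns x)"
  using cover[of x k ns] cof_eq by metis

lemma prec_iff: "prec k ns a b \<longleftrightarrow> a \<in> ground k ns \<and> b \<in> ground k ns \<and> cof k ns a = cof k ns b \<and> a < b"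
proof
  assume "prec k ns a b"
  then obtain i where "i \<in> {1..k}" "a \<in> chain_block ns i" "b \<in> chain_block ns i" "a < b"
    unfolding prec_def by blast
  then show "a \<in> ground k ns \<and> b \<in> ground k ns \<and> cof k ns a = cof k ns b \<and> a < b"
    using block_sub cof_eq by blast
next
  assume "a \<in> ground k ns \<and> b \<in> ground k ns \<and> cof k ns a = cof k ns b \<and> a < b"
  then show "prec k ns a b" unfolding prec_def using cof_in by metis
qed


lemma schain_iff: "subset.chain A C \<longleftrightarrow> C \<subseteq> A \<and> (\<forall>x\<in>C. \<forall>y\<in>C. x \<subseteq> y \<or> y \<subseteq> x)"
  unfolding subset.chain_def by blast

lemma smaxchain_iff: "subset.maxchain A C \<longleftrightarrow> subset.chain A C \<and> \<not> (\<exists>D. subset.chain A D \<and> C \<subset> D)"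
  unfolding subset.maxchain_def by blast

lemma maxchain_bottom:
  assumes "subset.maxchain A M" "b \<in> A" "\<forall>Y\<in>A. b \<subseteq> Y"
  shows "b \<in> M"
proof (rule ccontr)
  assume nb: "b \<notin> M"
  have ch: "subset.chain A M" using assms(1) smaxchain_iff by blast
  have "subset.chain A (insert b M)" using ch assms(2,3) unfolding schain_iff by blast
  moreover have "M \<subset> insert b M" using nb by blast
  ultimately show False using assms(1) smaxchain_iff by blast
qed

lemma maxchain_top:
  assumes "subset.maxchain A M" "b \<in> A" "\<forall>Y\<in>A. Y \<subseteq> b"
  shows "b \<in> M"
proof (rule ccontr)
  assume nb: "b \<notin> M"
  have ch: "subset.chain A M" using assms(1) smaxchain_iff by blast
  have "subset.chain A (insert b M)" using ch assms(2,3) unfolding schain_iff by blast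
  moreover have "M \<subset> insert b M" using nb by blast
  ultimately show False using assms(1) smaxchain_iff by blast
qed

lemma ground_upper: "upper_set k ns (ground k ns)"
  unfolding upper_set_def using prec_iff by blast

lemma finite_ground: "finite (ground k ns)"
  unfolding ground_def by simp

lemma finite_interval: "finite (interval_top k ns S)"
proof -
  have "interval_top k ns S \<subseteq> Pow (ground k ns)" unfolding interval_top_def by blast
  then show ?thesis using finite_ground finite_subset by blast
qed

lemma finite_maxchains: "finite {M. subset.maxchain (interval_top k ns S) M}"
proof -
  have "{M. subset.maxchain (interval_top k ns S) M} \<subseteq> Pow (interval_top k ns S)"
    unfolding smaxchain_iff schain_iff by blast
  then show ?thesis using finite_interval finite_subset by blast
qed

lemma f_base: "f_interval k ns (ground k ns) = 1"
proof -
  let ?G = "ground k ns"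
  have A: "interval_top k ns ?G = {?G}" using ground_upper unfolding interval_top_def by blast
  have "{M. subset.maxchain {?G} M} = {{?G}}"
  proof (intro set_eqI iffI)
    fix M assume "M \<in> {M. subset.maxchain {?G} M}"
    then have mc: "subset.maxchain {?G} M" by simp
    then have "?G \<in> M" by (rule maxchain_bottom) auto
    moreover have "M \<subseteq> {?G}" using mc unfolding smaxchain_iff schain_iff by blast
    ultimately show "M \<in> {{?G}}" by blast
  next
    fix M assume "M \<in> {{?G}}"
    then have M: "M = {?G}" by simp
    have "subset.chain {?G} {?G}" unfolding schain_iff by blast
    moreover have "\<not> (\<exists>D. subset.chain {?G} D \<and> {?G} \<subset> D)" unfolding schain_iff by blast
    ultimately show "M \<in> {M. subset.maxchain {?G} M}" using M smaxchain_iff by blast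
  qed
  then show ?thesis unfolding f_interval_def A by simp
qed

lemma interval_mem: "Y \<in> interval_top k ns S \<longleftrightarrow> upper_set k ns Y \<and> S \<subseteq> Y \<and> Y \<subseteq> ground k ns"
  unfolding interval_top_def by simp

lemma f_rec:
  assumes upS: "upper_set k ns S" and SG: "S \<noteq> ground k ns"
  defines "X \<equiv> {x \<in> ground k ns - S. upper_set k ns (insert x S)}"
  shows "f_interval k ns S = (\<Sum>x\<in>X. f_interval k ns (insert x S))"
proof -
  let ?G = "ground k ns"
  let ?A = "interval_top k ns"
  have SsubG: "S \<subseteq> ?G" using upS unfolding upper_set_def by blast
  have SA: "S \<in> ?A S" using upS SsubG unfolding interval_top_def by blast
  have GA: "?G \<in> ?A S" using ground_upper SsubG unfolding interval_top_def by blast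
  have AxA: "?A (insert x S) \<subseteq> ?A S" for x unfolding interval_top_def by blast
  have eq: "{M. subset.maxchain (?A S) M} = (\<Union>x\<in>X. insert S ` {M. subset.maxchain (?A (insert x S)) M})"
  proof (intro set_eqI iffI)
    fix M assume "M \<in> {M. subset.maxchain (?A S) M}"
    then have mc: "subset.maxchain (?A S) M" by simp
    then have ch: "subset.chain (?A S) M" using smaxchain_iff by blast
    then have MA: "M \<subseteq> ?A S" and cmp: "\<forall>x\<in>M. \<forall>y\<in>M. x \<subseteq> y \<or> y \<subseteq> x" unfolding schain_iff by blast+
    have SM: "S \<in> M" using maxchain_bottom[OF mc SA] unfolding interval_top_def by blast
    have GM: "?G \<in> M" using maxchain_top[OF mc GA] unfolding interval_top_def by blast
    define M' where "M' = M - {S}"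
    have finM': "finite M'" using MA finite_interval finite_subset unfolding M'_def by blast
    have neM': "M' \<noteq> {}" using GM SG unfolding M'_def by blast
    obtain T where T: "T \<in> M'" "\<forall>Y\<in>M'. Y \<subseteq> T \<longrightarrow> T = Y"
      using finite_has_minimal[OF finM' neM'] by blast
    have Tle: "T \<subseteq> Y" if "Y \<in> M'" for Y using T cmp that unfolding M'_def by blast
    have TA: "T \<in> ?A S" using T(1) MA unfolding M'_def by blast
    then have upT: "upper_set k ns T" and ST: "S \<subseteq> T" and TG: "T \<subseteq> ?G"
      unfolding interval_top_def by blast+
    have TS: "T \<noteq> S" using T(1) unfolding M'_def by blast
    have finTS: "finite (T - S)" using TG finite_ground finite_subset by blast
    have neTS: "T - S \<noteq> {}" using ST TS by blast
    define x where "x = Max (T - S)"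
    have xTS: "x \<in> T - S" unfolding x_def using Max_in[OF finTS neTS] .
    have upx: "upper_set k ns (insert x S)"
      unfolding upper_set_def
    proof (intro conjI ballI allI impI)
      show "insert x S \<subseteq> ?G" using xTS TG SsubG by blast
    next
      fix a b assume a: "a \<in> insert x S" and p: "prec k ns a b"
      show "b \<in> insert x S"
      proof (cases "a \<in> S")
        case True then show ?thesis using upS p unfolding upper_set_def by blast
      next
        case False
        then have ax: "a = x" using a by blast
        have bT: "b \<in> T" using upT xTS p ax unfolding upper_set_def by blast
        have "x < b" using p ax prec_iff by blast
        then have "b \<notin> T - S" using Max_ge[OF finTS] unfolding x_def by fastforce
        then show ?thesis using bT by blast
      qed
    qed
    have xA: "insert x S \<in> ?A S" using upx xTS TG SsubG unfolding interval_top_def by blast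
    have xsubY: "insert x S \<subseteq> Y" if "Y \<in> M'" for Y using Tle[OF that] xTS ST by blast
    have "subset.chain (?A S) (insert (insert x S) M)"
      unfolding schain_iff
    proof (intro conjI ballI)
      show "insert (insert x S) M \<subseteq> ?A S" using xA MA by blast
    next
      fix u v assume "u \<in> insert (insert x S) M" "v \<in> insert (insert x S) M"
      moreover have "\<forall>Y\<in>M. insert x S \<subseteq> Y \<or> Y \<subseteq> insert x S"
        using xsubY unfolding M'_def by blast
      ultimately show "u \<subseteq> v \<or> v \<subseteq> u" using cmp by blast
    qed
    then have xM: "insert x S \<in> M" using mc smaxchain_iff by blast
    then have xM': "insert x S \<in> M'" using xTS unfolding M'_def by blast
    have Teq: "T = insert x S" using Tle[OF xM'] xsubY[OF T(1)] by blast
    have xX: "x \<in> X" unfolding X_def using xTS TG upx by blast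
    have "subset.maxchain (?A (insert x S)) M'"
      unfolding smaxchain_iff
    proof (intro conjI notI)
      show ch': "subset.chain (?A (insert x S)) M'"
        unfolding schain_iff
      proof (intro conjI ballI)
        show "M' \<subseteq> ?A (insert x S)"
        proof
          fix Y assume Y: "Y \<in> M'"
          then have "Y \<in> ?A S" using MA unfolding M'_def by blast
          then show "Y \<in> ?A (insert x S)" using xsubY[OF Y] unfolding interval_top_def by blast
        qed
      next
        fix u v assume "u \<in> M'" "v \<in> M'" then show "u \<subseteq> v \<or> v \<subseteq> u" using cmp unfolding M'_def by blast
      qed
      assume "\<exists>D. subset.chain (?A (insert x S)) D \<and> M' \<subset> D"
      then obtain D where D: "subset.chain (?A (insert x S)) D" "M' \<subset> D" by blast
      have "subset.chain (?A S) (insert S D)"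
        using D(1) AxA[of x] SA unfolding schain_iff interval_top_def by blast
      moreover have "S \<notin> D" using D(1) xTS unfolding schain_iff interval_top_def by blast
      then have "M \<subset> insert S D" using D(2) SM unfolding M'_def by blast
      ultimately show False using mc smaxchain_iff by blast
    qed
    moreover have "M = insert S M'" using SM unfolding M'_def by blast
    ultimately show "M \<in> (\<Union>x\<in>X. insert S ` {M. subset.maxchain (?A (insert x S)) M})"
      using xX by blast
  next
    fix M assume "M \<in> (\<Union>x\<in>X. insert S ` {M. subset.maxchain (?A (insert x S)) M})"
    then obtain x M' where xX: "x \<in> X" and mc': "subset.maxchain (?A (insert x S)) M'" and M: "M = insert S M'"
      by blast
    have upx: "upper_set k ns (insert x S)" and xG: "x \<in> ?G" and xS: "x \<notin> S" using xX unfolding X_def by blast+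
    have xA': "insert x S \<in> ?A (insert x S)" using upx unfolding interval_top_def upper_set_def by blast
    have xM': "insert x S \<in> M'" using maxchain_bottom[OF mc' xA'] unfolding interval_top_def by blast
    have ch': "subset.chain (?A (insert x S)) M'" using mc' smaxchain_iff by blast
    have chM: "subset.chain (?A S) M"
      using ch' AxA[of x] SA unfolding M schain_iff interval_top_def by blast
    have "\<not> (\<exists>D. subset.chain (?A S) D \<and> M \<subset> D)"
    proof
      assume "\<exists>D. subset.chain (?A S) D \<and> M \<subset> D"
      then obtain D where D: "subset.chain (?A S) D" "M \<subset> D" by blast
      then obtain Y where Y: "Y \<in> D" "Y \<notin> M" by blast
      have YA: "Y \<in> ?A S" using D(1) Y(1) unfolding schain_iff by blast
      have "insert x S \<in> D" using D(2) xM' M by blast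
      then have "Y \<subseteq> insert x S \<or> insert x S \<subseteq> Y" using D(1) Y(1) unfolding schain_iff by blast
      moreover have "\<not> Y \<subseteq> insert x S"
      proof
        assume "Y \<subseteq> insert x S"
        moreover have "S \<subseteq> Y" using YA unfolding interval_top_def by blast
        ultimately have "Y = S \<or> Y = insert x S" by blast
        then show False using Y(2) M xM' by blast
      qed
      ultimately have xY: "insert x S \<subseteq> Y" by blast
      have "subset.chain (?A (insert x S)) (D \<inter> ?A (insert x S))"
        using D(1) unfolding schain_iff by blast
      moreover have "Y \<in> ?A (insert x S)" using YA xY unfolding interval_top_def by blast
      then have "M' \<subset> D \<inter> ?A (insert x S)" using D(2) Y M ch' unfolding schain_iff by blast
      ultimately show False using mc' smaxchain_iff by blast
    qed
    then show "M \<in> {M. subset.maxchain (?A S) M}" using chM smaxchain_iff by blast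
  qed
  have finX: "finite X" unfolding X_def using finite_ground by simp
  have notS: "S \<notin> M'" if "x \<in> X" "subset.maxchain (?A (insert x S)) M'" for x M'
    using that unfolding X_def smaxchain_iff schain_iff interval_top_def by blast
  have inj: "inj_on (insert S) {M. subset.maxchain (?A (insert x S)) M}" if "x \<in> X" for x
  proof (rule inj_onI)
    fix M1 M2 assume "M1 \<in> {M. subset.maxchain (?A (insert x S)) M}" "M2 \<in> {M. subset.maxchain (?A (insert x S)) M}"
      "insert S M1 = insert S M2"
    then show "M1 = M2" using notS[OF that] by (metis insert_ident mem_Collect_eq)
  qed
  have disj: "insert S ` {M. subset.maxchain (?A (insert x S)) M} \<inter> insert S ` {M. subset.maxchain (?A (insert y S)) M} = {}"
    if "x \<in> X" "y \<in> X" "x \<noteq> y" for x y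
  proof (rule ccontr)
    assume "\<not> ?thesis"
    then obtain M1 M2 where M1: "subset.maxchain (?A (insert x S)) M1" and M2: "subset.maxchain (?A (insert y S)) M2"
      and e: "insert S M1 = insert S M2" by blast
    have "M1 = M2" using e notS[OF that(1) M1] notS[OF that(2) M2] by (metis insert_ident)
    have xA': "insert x S \<in> ?A (insert x S)" using that(1) unfolding X_def interval_top_def upper_set_def by blast
    have "insert x S \<in> M1" using maxchain_bottom[OF M1 xA'] unfolding interval_top_def by blast
    then have "insert x S \<in> ?A (insert y S)" using M2 \<open>M1 = M2\<close> unfolding smaxchain_iff schain_iff by blast
    then have "y \<in> insert x S" unfolding interval_top_def by blast
    then show False using that unfolding X_def by blast
  qed
  have "f_interval k ns S = card (\<Union>x\<in>X. insert S ` {M. subset.maxchain (?A (insert x S)) M})"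
    unfolding f_interval_def eq ..
  also have "\<dots> = (\<Sum>x\<in>X. card (insert S ` {M. subset.maxchain (?A (insert x S)) M}))"
    by (rule card_UN_disjoint) (use finX finite_maxchains disj in auto)
  also have "\<dots> = (\<Sum>x\<in>X. f_interval k ns (insert x S))"
    unfolding f_interval_def by (rule sum.cong) (auto simp: card_image inj)
  finally show ?thesis .
qed


lemma thmA:
  assumes "upper_set k ns S"
  shows "f_interval k ns S = card (permutations_of_multiset (image_mset (cof k ns) (mset_set (ground k ns - S))))"
  using assms
proof (induction "card (ground k ns - S)" arbitrary: S rule: less_induct)
  case less
  let ?G = "ground k ns"
  let ?c = "cof k ns"
  have SsubG: "S \<subseteq> ?G" using less.prems unfolding upper_set_def by blast
  show ?case
  proof (cases "S = ?G")
    case True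
    then show ?thesis using f_base by simp
  next
    case False
    define X where "X = {x \<in> ?G - S. upper_set k ns (insert x S)}"
    define D where "D = image_mset ?c (mset_set (?G - S))"
    have finGS: "finite (?G - S)" using finite_ground by blast
    have XGS: "X \<subseteq> ?G - S" unfolding X_def by blast
    have rec: "f_interval k ns S = (\<Sum>x\<in>X. f_interval k ns (insert x S))"
      using f_rec[OF less.prems False] unfolding X_def .
    have step: "f_interval k ns (insert x S) = card (permutations_of_multiset (D - {#?c x#}))" if x: "x \<in> X" for x
    proof -
      have xGS: "x \<in> ?G - S" and up: "upper_set k ns (insert x S)" using x unfolding X_def by blast+
      have "card (?G - insert x S) < card (?G - S)"
        using xGS finGS by (metis Diff_insert card_Diff1_less)
      then have "f_interval k ns (insert x S) = card (permutations_of_multiset (image_mset ?c (mset_set (?G - insert x S))))"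
        by (rule less.hyps[OF _ up])
      moreover have e1: "?G - insert x S = (?G - S) - {x}" by blast
      have "mset_set (?G - S) = add_mset x (mset_set (?G - insert x S))"
        unfolding e1 by (rule mset_set.remove[OF finGS xGS])
      then have "D = add_mset (?c x) (image_mset ?c (mset_set (?G - insert x S)))"
        unfolding D_def by simp
      then have "D - {#?c x#} = image_mset ?c (mset_set (?G - insert x S))"
        by simp
      ultimately show ?thesis by simp
    qed
    have inj: "inj_on ?c X"
    proof (rule inj_onI)
      fix x y assume x: "x \<in> X" and y: "y \<in> X" and e: "?c x = ?c y"
      show "x = y"
      proof (rule ccontr)
        assume "x \<noteq> y"
        then consider "x < y" | "y < x" by linarith
        then show False
        proof cases
          case 1
          then have "prec k ns x y" unfolding prec_iff using x y e XGS by blast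
          moreover have "upper_set k ns (insert x S)" using x unfolding X_def by blast
          ultimately have "y \<in> insert x S" unfolding upper_set_def by blast
          then show False using y XGS \<open>x \<noteq> y\<close> by blast
        next
          case 2
          then have "prec k ns y x" unfolding prec_iff using x y e[symmetric] XGS by blast
          moreover have "upper_set k ns (insert y S)" using y unfolding X_def by blast
          ultimately have "x \<in> insert y S" unfolding upper_set_def by blast
          then show False using x XGS \<open>x \<noteq> y\<close> by blast
        qed
      qed
    qed
    have setD: "set_mset D = ?c ` (?G - S)" unfolding D_def using finGS by simp
    have img: "?c ` X = set_mset D"
    proof
      show "?c ` X \<subseteq> set_mset D" using XGS unfolding setD by blast
    next
      show "set_mset D \<subseteq> ?c ` X"
      proof
        fix c assume "c \<in> set_mset D"
        then obtain y where y: "y \<in> ?G - S" "?c y = c" unfolding setD by blast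
        define B where "B = {z \<in> ?G - S. ?c z = c}"
        have finB: "finite B" by (rule finite_subset[OF _ finGS]) (auto simp: B_def)
        have neB: "B \<noteq> {}" using y unfolding B_def by blast
        define x where "x = Max B"
        have xB: "x \<in> B" unfolding x_def using Max_in[OF finB neB] .
        have "upper_set k ns (insert x S)"
          unfolding upper_set_def
        proof (intro conjI ballI allI impI)
          show "insert x S \<subseteq> ?G" using xB SsubG unfolding B_def by blast
        next
          fix a b assume a: "a \<in> insert x S" and p: "prec k ns a b"
          show "b \<in> insert x S"
          proof (cases "a \<in> S")
            case True then show ?thesis using less.prems p unfolding upper_set_def by blast
          next
            case False
            then have ax: "a = x" using a by blast
            have bG: "b \<in> ?G" "?c b = c" "x < b" using p xB unfolding ax prec_iff B_def by auto
            have "b \<notin> B" using Max_ge[OF finB] bG(3) unfolding x_def by fastforce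
            then show ?thesis using bG unfolding B_def by blast
          qed
        qed
        then have "x \<in> X" using xB unfolding X_def B_def by blast
        moreover have "?c x = c" using xB unfolding B_def by blast
        ultimately show "c \<in> ?c ` X" by blast
      qed
    qed
    have "?G - S \<noteq> {}" using False SsubG by blast
    then have Dne: "D \<noteq> {#}" using setD by auto
    have "f_interval k ns S = (\<Sum>x\<in>X. card (permutations_of_multiset (D - {#?c x#})))"
      using rec step by simp
    also have "\<dots> = (\<Sum>c\<in>?c ` X. card (permutations_of_multiset (D - {#c#})))"
      using sum.reindex[OF inj, of "\<lambda>c. card (permutations_of_multiset (D - {#c#}))"] by simp
    also have "\<dots> = card (permutations_of_multiset D)"
      unfolding img using card_perms_rec[OF Dne] by simp
    finally show ?thesis unfolding D_def .
  qed
qed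


lemma ground_eq: "ground k ns = {1..chain_offset ns (Suc k)}"
  unfolding ground_def total_eq ..

definition word :: "nat \<Rightarrow> (nat \<Rightarrow> nat) \<Rightarrow> (nat \<Rightarrow> nat) \<Rightarrow> nat list" where
  "word k ns \<pi> = map (\<lambda>p. cof k ns (\<pi> p)) [1..<Suc (chain_offset ns (Suc k))]"

definition decode :: "nat \<Rightarrow> (nat \<Rightarrow> nat) \<Rightarrow> nat list \<Rightarrow> nat \<Rightarrow> nat" where
  "decode k ns w p = (if p \<in> ground k ns then chain_offset ns (w!(p-1)) + count_list (take p w) (w!(p-1)) else p)"

definition C0 :: "nat \<Rightarrow> (nat \<Rightarrow> nat) \<Rightarrow> nat multiset" where
  "C0 k ns = image_mset (cof k ns) (mset_set (ground k ns))"

lemma length_word: "length (word k ns \<pi>) = chain_offset ns (Suc k)"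
  unfolding word_def by simp

lemma nth_word: "q < chain_offset ns (Suc k) \<Longrightarrow> word k ns \<pi> ! q = cof k ns (\<pi> (Suc q))"
  unfolding word_def by (simp del: upt_Suc add: nth_map)

lemma count_list_map_upt: "count_list (map f [a..<b]) c = card {q \<in> {a..<b}. f q = c}"
proof -
  have "count_list (map f xs) c = length (filter (\<lambda>q. f q = c) xs)" for xs :: "nat list"
    by (induction xs) auto
  then have "count_list (map f [a..<b]) c = card ({q. f q = c} \<inter> set [a..<b])"
    using distinct_length_filter[of "[a..<b]" "\<lambda>q. f q = c"] by simp
  also have "\<dots> = card {q \<in> {a..<b}. f q = c}" by (rule arg_cong[where f=card]) auto
  finally show ?thesis .
qed

lemma count_filter_compl: "count_list xs c + length (filter (\<lambda>x. x \<noteq> c) xs) = length xs"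
  by (induction xs) auto

lemma count_take_Suc: "q < length w \<Longrightarrow> count_list (take (Suc q) w) c = count_list (take q w) c + (if w!q = c then 1 else 0)"
  by (simp add: take_Suc_conv_app_nth)

lemma count_take_mono: "p \<le> q \<Longrightarrow> count_list (take p w) c \<le> count_list (take q w) c"
proof -
  assume "p \<le> q"
  have "take q w = take p (take q w) @ drop p (take q w)" by (rule append_take_drop_id[symmetric])
  moreover have "take p (take q w) = take p w" using \<open>p \<le> q\<close> by (simp add: min_def)
  ultimately have "count_list (take q w) c = count_list (take p w) c + count_list (drop p (take q w)) c"
    by (metis count_list_append)
  then show ?thesis by simp
qed

lemma count_take_le: "count_list (take p w) c \<le> count_list w c"
proof -
  have "w = take p w @ drop p w" by simp
  then have "count_list w c = count_list (take p w) c + count_list (drop p w) c" by (metis count_list_append)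
  then show ?thesis by simp
qed

lemma block_cof: "i \<in> {1..k} \<Longrightarrow> {x \<in> ground k ns. cof k ns x = i} = chain_block ns i"
  using block_sub cof_eq cof_in by blast

lemma card_block: "card (chain_block ns i) = ns i"
  unfolding chain_block_def by simp

lemma count_C0: "i \<in> {1..k} \<Longrightarrow> count (C0 k ns) i = ns i"
  unfolding C0_def by (simp add: count_image_mset_eq_card_vimage finite_ground block_cof card_block)

lemma set_C0: "set_mset (C0 k ns) = cof k ns ` ground k ns"
  unfolding C0_def using finite_ground by simp

lemma size_C0: "size (C0 k ns) = chain_offset ns (Suc k)"
  unfolding C0_def by (simp add: ground_eq)

lemma D2:
  assumes le: "linear_extension k ns \<pi>" and pG: "p \<in> ground k ns"
  shows "\<pi> p = decode k ns (word k ns \<pi>) p"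
proof -
  let ?G = "ground k ns"
  let ?n = "chain_offset ns (Suc k)"
  let ?c = "cof k ns"
  have perm: "\<pi> permutes ?G" and ord: "\<And>a b. prec k ns a b \<Longrightarrow> inv \<pi> a < inv \<pi> b"
    using le unfolding linear_extension_def by blast+
  have p1: "1 \<le> p" "p \<le> ?n" using pG unfolding ground_eq by auto
  define x where "x = \<pi> p"
  have xG: "x \<in> ?G" unfolding x_def using perm pG by (simp add: permutes_in_image)
  define c where "c = ?c x"
  have cx: "c \<in> {1..k}" "x \<in> chain_block ns c" using cof_in[OF xG] unfolding c_def by blast+
  have wp: "word k ns \<pi> ! (p - 1) = c"
    using nth_word[of "p - 1" ns k \<pi>] p1 unfolding c_def x_def by simp
  have tk: "take p (word k ns \<pi>) = map (\<lambda>q. ?c (\<pi> q)) [1..<Suc p]"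
    unfolding word_def using p1 by (simp del: upt_Suc add: take_map take_upt)
  have cnt: "count_list (take p (word k ns \<pi>)) c = card {q \<in> {1..<Suc p}. ?c (\<pi> q) = c}"
    unfolding tk by (rule count_list_map_upt)
  have invp: "inv \<pi> (\<pi> q) = q" for q using permutes_inverses(2)[OF perm] by simp
  have pinv: "\<pi> (inv \<pi> y) = y" for y using permutes_inverses(1)[OF perm] by simp
  have img: "\<pi> ` {q \<in> {1..<Suc p}. ?c (\<pi> q) = c} = {chain_offset ns c + 1..x}"
  proof
    show "\<pi> ` {q \<in> {1..<Suc p}. ?c (\<pi> q) = c} \<subseteq> {chain_offset ns c + 1..x}"
    proof
      fix y assume "y \<in> \<pi> ` {q \<in> {1..<Suc p}. ?c (\<pi> q) = c}"
      then obtain q where q: "q \<in> {1..<Suc p}" "?c (\<pi> q) = c" "y = \<pi> q" by blast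
      have qG: "q \<in> ?G" using q(1) p1 unfolding ground_eq by auto
      have yG: "y \<in> ?G" using q(3) qG perm by (simp add: permutes_in_image)
      have yb: "y \<in> chain_block ns c" using cof_in[OF yG] q(2,3) by simp
      have "y \<le> x"
      proof (rule ccontr)
        assume "\<not> y \<le> x"
        then have "prec k ns x y" unfolding prec_iff using xG yG q(2,3) c_def by simp
        then have "inv \<pi> x < inv \<pi> y" by (rule ord)
        then have "p < q" using q(3) invp[of q] invp[of p] unfolding x_def by simp
        then show False using q(1) by simp
      qed
      then show "y \<in> {chain_offset ns c + 1..x}" using yb unfolding chain_block_def by simp
    qed
  next
    show "{chain_offset ns c + 1..x} \<subseteq> \<pi> ` {q \<in> {1..<Suc p}. ?c (\<pi> q) = c}"
    proof
      fix y assume y: "y \<in> {chain_offset ns c + 1..x}"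
      have yb: "y \<in> chain_block ns c" using y cx(2) unfolding chain_block_def by simp
      have yG: "y \<in> ?G" using block_sub[OF cx(1)] yb by blast
      define q where "q = inv \<pi> y"
      have qy: "\<pi> q = y" unfolding q_def by (rule pinv)
      have qG: "q \<in> ?G" unfolding q_def using permutes_inv[OF perm] yG by (simp add: permutes_in_image)
      have cq: "?c (\<pi> q) = c" using qy cof_eq[OF cx(1) yb] by simp
      have "q \<le> p"
      proof (cases "y = x")
        case True then show ?thesis using invp[of p] unfolding q_def x_def by simp
      next
        case False
        then have "y < x" using y by simp
        then have "prec k ns y x" unfolding prec_iff using xG yG cof_eq[OF cx(1) yb] c_def by simp
        then have "inv \<pi> y < inv \<pi> x" by (rule ord)
        then show ?thesis using invp[of p] unfolding q_def x_def by simp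
      qed
      then have "q \<in> {q \<in> {1..<Suc p}. ?c (\<pi> q) = c}" using qG cq unfolding ground_eq by auto
      then show "y \<in> \<pi> ` {q \<in> {1..<Suc p}. ?c (\<pi> q) = c}" using qy by force
    qed
  qed
  have injp: "inj_on \<pi> {q \<in> {1..<Suc p}. ?c (\<pi> q) = c}"
    using permutes_inj[OF perm] by (simp add: inj_on_def inj_def)
  have "card {q \<in> {1..<Suc p}. ?c (\<pi> q) = c} = card {chain_offset ns c + 1..x}"
    using card_image[OF injp] img by simp
  also have "\<dots> = x - chain_offset ns c" by simp
  finally have "count_list (take p (word k ns \<pi>)) c = x - chain_offset ns c" using cnt by simp
  moreover have "chain_offset ns c + 1 \<le> x" using cx(2) unfolding chain_block_def by simp
  ultimately show ?thesis unfolding decode_def using pG wp x_def by simp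
qed


lemma D1:
  assumes le: "linear_extension k ns \<pi>"
  shows "mset (word k ns \<pi>) = C0 k ns"
proof -
  have perm: "\<pi> permutes ground k ns" using le unfolding linear_extension_def by blast
  have "mset (word k ns \<pi>) = image_mset (\<lambda>p. cof k ns (\<pi> p)) (mset_set {1..<Suc (chain_offset ns (Suc k))})"
    unfolding word_def mset_map by (simp del: upt_Suc)
  also have "{1..<Suc (chain_offset ns (Suc k))} = ground k ns" unfolding ground_eq by auto
  also have "image_mset (\<lambda>p. cof k ns (\<pi> p)) (mset_set (ground k ns)) = image_mset (cof k ns) (image_mset \<pi> (mset_set (ground k ns)))"
    by (simp add: multiset.map_comp comp_def)
  also have "image_mset \<pi> (mset_set (ground k ns)) = mset_set (\<pi> ` ground k ns)"
    by (rule image_mset_mset_set) (use permutes_inj[OF perm] in \<open>simp add: inj_on_def inj_def\<close>)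
  also have "\<pi> ` ground k ns = ground k ns" by (rule permutes_image[OF perm])
  finally show ?thesis unfolding C0_def .
qed

lemma D3:
  assumes w: "w \<in> permutations_of_multiset (C0 k ns)"
  shows "linear_extension k ns (decode k ns w) \<and> word k ns (decode k ns w) = w"
proof -
  let ?G = "ground k ns"
  let ?n = "chain_offset ns (Suc k)"
  let ?d = "decode k ns w"
  have mw: "mset w = C0 k ns" using w by (simp add: permutations_of_multiset_def)
  have lw: "length w = ?n" using arg_cong[OF mw, of size] size_C0 by simp
  have setw: "set w = cof k ns ` ?G" using arg_cong[OF mw, of set_mset] set_C0 by simp
  have Gn: "p \<in> ?G \<longleftrightarrow> 1 \<le> p \<and> p \<le> ?n" for p unfolding ground_eq by auto
  have pl: "p - 1 < length w" "1 \<le> p" if "p \<in> ?G" for p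
  proof -
    show "1 \<le> p" using that Gn by blast
    have "p \<le> ?n" using that Gn by blast
    then show "p - 1 < length w" using lw \<open>1 \<le> p\<close> by linarith
  qed
  have cp: "w!(p-1) \<in> {1..k}" if "p \<in> ?G" for p
  proof -
    have "w!(p-1) \<in> set w" using pl(1)[OF that] by (rule nth_mem)
    then show ?thesis using setw cof_in by force
  qed
  have cnt_ge: "count_list (take p w) (w!(p-1)) \<ge> 1" if "p \<in> ?G" for p
  proof -
    have "p - 1 < length w" using pl[OF that] by simp
    then have "count_list (take (Suc (p-1)) w) (w!(p-1)) = count_list (take (p-1) w) (w!(p-1)) + 1"
      using count_take_Suc[of "p-1" w "w!(p-1)"] by simp
    then show ?thesis using that Gn by simp
  qed
  have cnt_le: "count_list (take p w) (w!(p-1)) \<le> ns (w!(p-1))" if "p \<in> ?G" for p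
  proof -
    have "count_list w (w!(p-1)) = count (mset w) (w!(p-1))" by (simp add: count_mset)
    also have "\<dots> = ns (w!(p-1))" using mw count_C0[OF cp[OF that]] by simp
    finally show ?thesis using count_take_le by metis
  qed
  have dblock: "?d p \<in> chain_block ns (w!(p-1))" if "p \<in> ?G" for p
    using cnt_ge[OF that] cnt_le[OF that] that unfolding decode_def chain_block_def by simp
  have dG: "?d p \<in> ?G" if "p \<in> ?G" for p using dblock[OF that] block_sub[OF cp[OF that]] by blast
  have dcof: "cof k ns (?d p) = w!(p-1)" if "p \<in> ?G" for p using cof_eq[OF cp[OF that] dblock[OF that]] .
  have strict: "count_list (take p w) c < count_list (take p' w) c" if "p \<in> ?G" "p' \<in> ?G" "p < p'" "w!(p'-1) = c" for p p' c
  proof -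
    have "p' - 1 < length w" using pl[OF that(2)] by simp
    then have "count_list (take (Suc (p'-1)) w) c = count_list (take (p'-1) w) c + 1"
      using count_take_Suc[of "p'-1" w c] that(4) by simp
    moreover have "count_list (take p w) c \<le> count_list (take (p'-1) w) c"
      using count_take_mono[of p "p'-1" w c] that(3) by simp
    ultimately show ?thesis using that Gn by simp
  qed
  have mono: "count_list (take p w) c \<le> count_list (take p' w) c" if "p \<le> p'" for p p' c
    by (rule count_take_mono[OF that])
  have inj: "inj_on ?d ?G"
  proof (rule inj_onI)
    fix p p' assume p: "p \<in> ?G" and p': "p' \<in> ?G" and e: "?d p = ?d p'"
    have cc: "w!(p-1) = w!(p'-1)" using dcof[OF p] dcof[OF p'] e by simp
    have ce: "count_list (take p w) (w!(p-1)) = count_list (take p' w) (w!(p-1))"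
      using e p p' cc unfolding decode_def by simp
    show "p = p'"
    proof (rule ccontr)
      assume "p \<noteq> p'"
      then consider "p < p'" | "p' < p" by linarith
      then show False
      proof cases
        case 1 then show ?thesis using strict[OF p p' 1 cc[symmetric]] ce by simp
      next
        case 2 then show ?thesis using strict[OF p' p 2 refl] ce cc by simp
      qed
    qed
  qed
  have imgG: "?d ` ?G = ?G"
    by (rule endo_inj_surj[OF finite_ground _ inj]) (use dG in blast)
  have perm: "?d permutes ?G"
  proof (rule bij_imp_permutes)
    show "bij_betw ?d ?G ?G" unfolding bij_betw_def using inj imgG by blast
    show "\<And>x. x \<notin> ?G \<Longrightarrow> ?d x = x" unfolding decode_def by simp
  qed
  have ord: "inv ?d a < inv ?d b" if pr: "prec k ns a b" for a b
  proof -
    have ab: "a \<in> ?G" "b \<in> ?G" "cof k ns a = cof k ns b" "a < b" using pr prec_iff by blast+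
    define p where "p = inv ?d a"
    define p' where "p' = inv ?d b"
    have pa: "?d p = a" unfolding p_def using permutes_inverses(1)[OF perm] by simp
    have pb: "?d p' = b" unfolding p'_def using permutes_inverses(1)[OF perm] by simp
    have pG: "p \<in> ?G" unfolding p_def using permutes_inv[OF perm] ab(1) by (simp add: permutes_in_image)
    have p'G: "p' \<in> ?G" unfolding p'_def using permutes_inv[OF perm] ab(2) by (simp add: permutes_in_image)
    have c1: "w!(p-1) = cof k ns a" using dcof[OF pG] pa by simp
    have c2: "w!(p'-1) = cof k ns a" using dcof[OF p'G] pb ab(3) by simp
    show ?thesis
    proof (rule ccontr)
      assume "\<not> inv ?d a < inv ?d b"
      then have "p' \<le> p" unfolding p_def p'_def by simp
      then have "count_list (take p' w) (cof k ns a) \<le> count_list (take p w) (cof k ns a)" by (rule mono)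
      then have "b \<le> a" using pa pb pG p'G c1 c2 unfolding decode_def by simp
      then show False using ab(4) by simp
    qed
  qed
  have le: "linear_extension k ns ?d" unfolding linear_extension_def using perm ord by blast
  have "word k ns ?d = w"
  proof (rule nth_equalityI)
    show "length (word k ns ?d) = length w" using lw length_word by simp
    fix q assume "q < length (word k ns ?d)"
    then have q: "q < ?n" using length_word by simp
    then have "Suc q \<in> ?G" using Gn by simp
    then show "word k ns ?d ! q = w ! q" using nth_word[OF q] dcof by simp
  qed
  then show ?thesis using le by blast
qed

lemma D4:
  assumes le: "linear_extension k ns \<pi>" and i: "i \<in> {1..k}"
  shows "(\<exists>m\<in>chain_block ns i. \<pi> m = m) \<longleftrightarrow> good (word k ns \<pi>) i (chain_offset ns i)"
proof -
  let ?G = "ground k ns"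
  let ?n = "chain_offset ns (Suc k)"
  let ?w = "word k ns \<pi>"
  have Gn: "p \<in> ?G \<longleftrightarrow> 1 \<le> p \<and> p \<le> ?n" for p unfolding ground_eq by auto
  have perm: "\<pi> permutes ?G" using le unfolding linear_extension_def by blast
  have key: "\<pi> (Suc q) = chain_offset ns i + count_list (take q ?w) i + 1" if q: "q < ?n" "?w!q = i" for q
  proof -
    have "Suc q \<in> ?G" using q Gn by simp
    then have "\<pi> (Suc q) = decode k ns ?w (Suc q)" by (rule D2[OF le])
    also have "\<dots> = chain_offset ns i + count_list (take (Suc q) ?w) i"
      unfolding decode_def using \<open>Suc q \<in> ?G\<close> q by simp
    also have "count_list (take (Suc q) ?w) i = count_list (take q ?w) i + 1"
      using count_take_Suc[of q ?w i] q length_word by simp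
    finally show ?thesis by simp
  qed
  have cmp: "count_list (take q ?w) i + length (filter (\<lambda>x. x \<noteq> i) (take q ?w)) = q" if "q < ?n" for q
    using count_filter_compl[of "take q ?w" i] that length_word by simp
  show ?thesis
  proof
    assume "\<exists>m\<in>chain_block ns i. \<pi> m = m"
    then obtain m where m: "m \<in> chain_block ns i" "\<pi> m = m" by blast
    have mG: "m \<in> ?G" using block_sub[OF i] m(1) by blast
    define q where "q = m - 1"
    have q: "q < ?n" "Suc q = m" using mG Gn unfolding q_def by auto
    have wq: "?w!q = i" using nth_word[OF q(1)] q(2) m cof_eq[OF i m(1)] by simp
    have "length (filter (\<lambda>x. x \<noteq> i) (take q ?w)) = chain_offset ns i"
      using key[OF q(1) wq] cmp[OF q(1)] q(2) m(2) by simp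
    then show "good ?w i (chain_offset ns i)" unfolding good_def using q(1) wq length_word by auto
  next
    assume "good ?w i (chain_offset ns i)"
    then obtain q where q: "q < length ?w" "?w!q = i" "length (filter (\<lambda>x. x \<noteq> i) (take q ?w)) = chain_offset ns i"
      unfolding good_def by blast
    have qn: "q < ?n" using q(1) length_word by simp
    have fix1: "\<pi> (Suc q) = Suc q" using key[OF qn q(2)] cmp[OF qn] q(3) by simp
    have "Suc q \<in> ?G" using qn Gn by simp
    then have "\<pi> (Suc q) \<in> ?G" using perm by (simp add: permutes_in_image)
    then have "\<pi> (Suc q) \<in> chain_block ns (cof k ns (\<pi> (Suc q)))" using cof_in by blast
    then have "Suc q \<in> chain_block ns i" using nth_word[OF qn] q(2) fix1 by simp
    then show "\<exists>m\<in>chain_block ns i. \<pi> m = m" using fix1 by blast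
  qed
qed


theorem lemma5p6:
  fixes k :: nat and ns :: "nat \<Rightarrow> nat" and I :: "nat set"
  assumes "\<forall>i\<in>{1..k}. ns i \<ge> 1"
    and "I \<subseteq> {1..k}"
  shows "f_interval k ns {chain_offset ns i + ns i | i. i \<in> I}
       = card {\<pi>. linear_extension k ns \<pi> \<and>
                 (\<forall>i\<in>I. \<exists>m\<in>chain_block ns i. \<pi> m = m)}"
proof -
  let ?G = "ground k ns"
  let ?N = "chain_offset ns"
  let ?c = "cof k ns"
  define S0 where "S0 = {?N i + ns i | i. i \<in> I}"
  define R where "R = {\<pi>. linear_extension k ns \<pi> \<and> (\<forall>i\<in>I. \<exists>m\<in>chain_block ns i. \<pi> m = m)}"
  define W where "W = {w \<in> permutations_of_multiset (C0 k ns). \<forall>i\<in>I. good w i (?N i)}"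
  have top: "?N i + ns i \<in> chain_block ns i" if "i \<in> I" for i
    using assms that unfolding chain_block_def by force
  have cof_top: "?c (?N i + ns i) = i" if "i \<in> I" for i
    using cof_eq[OF _ top[OF that]] assms(2) that by blast
  have S0G: "S0 \<subseteq> ?G" unfolding S0_def using top block_sub assms(2) by blast
  have upS0: "upper_set k ns S0"
    unfolding upper_set_def
  proof (intro conjI ballI allI impI)
    show "S0 \<subseteq> ?G" by (rule S0G)
  next
    fix a b assume a: "a \<in> S0" and p: "prec k ns a b"
    obtain i where i: "i \<in> I" "a = ?N i + ns i" using a unfolding S0_def by blast
    have bG: "b \<in> ?G" "?c b = i" "a < b" using p cof_top[OF i(1)] i(2) unfolding prec_iff by auto
    have "b \<in> chain_block ns i" using cof_in[OF bG(1)] bG(2) by simp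
    then have "b \<le> a" using i(2) unfolding chain_block_def by simp
    then show "b \<in> S0" using bG(3) by simp
  qed
  have injS0: "inj_on ?c S0"
    by (rule inj_onI) (auto simp: S0_def cof_top)
  have imgS0: "?c ` S0 = I"
  proof
    show "?c ` S0 \<subseteq> I" unfolding S0_def using cof_top by auto
    show "I \<subseteq> ?c ` S0"
    proof
      fix i assume "i \<in> I"
      then have "?N i + ns i \<in> S0" "?c (?N i + ns i) = i" unfolding S0_def using cof_top by auto
      then show "i \<in> ?c ` S0" by force
    qed
  qed
  have "image_mset ?c (mset_set (?G - S0)) = image_mset ?c (mset_set ?G - mset_set S0)"
    using mset_set_Diff[OF finite_ground S0G] by simp
  also have "\<dots> = image_mset ?c (mset_set ?G) - image_mset ?c (mset_set S0)"
    by (rule image_mset_Diff[OF subset_imp_msubset_mset_set[OF S0G finite_ground]])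
  also have "image_mset ?c (mset_set S0) = mset_set I"
    using image_mset_mset_set[OF injS0] imgS0 by simp
  finally have Deq: "image_mset ?c (mset_set (?G - S0)) = C0 k ns - mset_set I" unfolding C0_def .
  have LHS: "f_interval k ns S0 = card (permutations_of_multiset (C0 k ns - mset_set I))"
    using thmA[OF upS0] Deq by simp
  have cntI: "count (C0 k ns) i = ns i" if "i \<in> I" for i using count_C0 assms(2) that by blast
  have Wcard: "card W = card (permutations_of_multiset (C0 k ns - mset_set I))"
    unfolding W_def
  proof (rule partB)
    show "I \<subseteq> set_mset (C0 k ns)"
    proof
      fix i assume i: "i \<in> I"
      then have "0 < count (C0 k ns) i" using cntI assms by force
      then show "i \<in># C0 k ns" by (metis count_greater_zero_iff)
    qed
    show "\<forall>i\<in>I. ?N i + count (C0 k ns) i \<le> size (C0 k ns)"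
    proof
      fix i assume i: "i \<in> I"
      have "?N i + ns i = ?N (Suc i)" using offset_Suc[of i ns] assms(2) i by force
      also have "\<dots> \<le> ?N (Suc k)" using offset_mono[of "Suc i" "Suc k" ns] assms(2) i by force
      finally show "?N i + count (C0 k ns) i \<le> size (C0 k ns)" using cntI[OF i] size_C0 by simp
    qed
    show "\<forall>i\<in>I. \<forall>j\<in>I. i \<noteq> j \<longrightarrow> {?N i<..?N i + count (C0 k ns) i} \<inter> {?N j<..?N j + count (C0 k ns) j} = {}"
    proof (intro ballI impI)
      fix i j assume ij: "i \<in> I" "j \<in> I" "i \<noteq> j"
      have e: "{?N i<..?N i + count (C0 k ns) i} = chain_block ns i" "{?N j<..?N j + count (C0 k ns) j} = chain_block ns j"
        using cntI ij unfolding chain_block_def by auto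
      have "1 \<le> i" "1 \<le> j" using ij assms(2) by auto
      then show "{?N i<..?N i + count (C0 k ns) i} \<inter> {?N j<..?N j + count (C0 k ns) j} = {}"
        unfolding e using block_disj ij(3) by blast
    qed
  qed
  have bij: "bij_betw (word k ns) R W"
    unfolding bij_betw_def
  proof
    show "inj_on (word k ns) R"
    proof (rule inj_onI)
      fix \<pi>1 \<pi>2 assume p1: "\<pi>1 \<in> R" and p2: "\<pi>2 \<in> R" and e: "word k ns \<pi>1 = word k ns \<pi>2"
      have le1: "linear_extension k ns \<pi>1" and le2: "linear_extension k ns \<pi>2" using p1 p2 unfolding R_def by blast+
      have pm1: "\<pi>1 permutes ?G" and pm2: "\<pi>2 permutes ?G" using le1 le2 unfolding linear_extension_def by blast+
      show "\<pi>1 = \<pi>2"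
      proof
        fix p
        show "\<pi>1 p = \<pi>2 p"
        proof (cases "p \<in> ?G")
          case True then show ?thesis using D2[OF le1 True] D2[OF le2 True] e by simp
        next
          case False then show ?thesis using permutes_not_in[OF pm1 False] permutes_not_in[OF pm2 False] by simp
        qed
      qed
    qed
    show "word k ns ` R = W"
    proof
      show "word k ns ` R \<subseteq> W"
      proof
        fix w assume "w \<in> word k ns ` R"
        then obtain \<pi> where \<pi>: "\<pi> \<in> R" "w = word k ns \<pi>" by blast
        have le: "linear_extension k ns \<pi>" and fx: "\<forall>i\<in>I. \<exists>m\<in>chain_block ns i. \<pi> m = m" using \<pi>(1) unfolding R_def by blast+
        have "w \<in> permutations_of_multiset (C0 k ns)" using D1[OF le] \<pi>(2) by (simp add: permutations_of_multiset_def)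
        moreover have "\<forall>i\<in>I. good w i (?N i)" using D4[OF le] fx \<pi>(2) assms(2) by blast
        ultimately show "w \<in> W" unfolding W_def by blast
      qed
      show "W \<subseteq> word k ns ` R"
      proof
        fix w assume w: "w \<in> W"
        then have wp: "w \<in> permutations_of_multiset (C0 k ns)" and g: "\<forall>i\<in>I. good w i (?N i)" unfolding W_def by blast+
        have le: "linear_extension k ns (decode k ns w)" and ww: "word k ns (decode k ns w) = w"
          using D3[OF wp] by blast+
        have "\<forall>i\<in>I. \<exists>m\<in>chain_block ns i. decode k ns w m = m" using D4[OF le] g ww assms(2) by auto
        then have "decode k ns w \<in> R" unfolding R_def using le by blast
        then show "w \<in> word k ns ` R" using ww by force
      qed
    qed
  qed
  have "card R = card W" by (rule bij_betw_same_card[OF bij])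
  then show ?thesis using LHS Wcard unfolding S0_def R_def by simp
qed


end
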